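(* Let $\mathcal{A}$ be an $(a,b)$-absorbing set in a Tanner graph with $b\geq 1$, and run the syndrome-based Gallager-B decoder on the absorbing set graph $\mathcal{G}_{\mathcal{A}}$ with error pattern $e=\vec{1}$, i.e. every variable node of $\mathcal{A}$ is in error. Then $\mathcal{A}$ is a failure inducing set for $\mathcal{G}_{\mathcal{A}}$. More precisely: - the input syndrome is $1$ exactly at the check nodes of $\mathcal{O}_{\mathcal{A}}$; - the estimated syndrome equals $\vec{0}$ at every iteration; - consequently the estimated syndrome never matches the input syndrome at the $b$ odd-degree check nodes.
   Context: Tanner graph: a bipartite graph $\mathcal{G}=(V,W;E)$ with variable nodes $V$ and check nodes $W$. Equivalently, a binary parity-check matrix $H$ with rows indexed by $W$ and columns by $V$, where $h_{c,v}=1$ iff $(v,c)\in E$. Notation for a subset $S\subseteq V$: - $\mathcal{N}(S)$ is the set of check nodes adjacent to some vertex of $S$. - $\mathcal{G}_S$ is the subgraph with vertex set $S\cup\mathcal{N}(S)$ and all edges of $\mathcal{G}$ between $S$ and $\mathcal{N}(S)$. - $\mathcal{O}_S$ (resp. $\mathcal{E}_S$) is the set of check nodes of $\mathcal{N}(S)$ having odd (resp. even) degree in $\mathcal{G}_S$. An $(a,b)$-absorbing set is a set $\mathcal{A}\subseteq V$ such that: - $|\mathcal{A}|=a$; - $|\mathcal{O}_{\mathcal{A}}|=b$; - every $v\in\mathcal{A}$ has strictly more neighbours in $\mathcal{E}_{\mathcal{A}}$ than in $\mathcal{O}_{\mathcal{A}}$. $\mathcal{G}_{\mathcal{A}}$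 is called the absorbing set graph and $H_{\mathcal{A}}$ denotes its parity-check matrix. Syndrome-based Gallager-B decoder on a Tanner graph $\mathcal{G}$: - An error pattern is $e\in\mathbb{F}_2^V$, the indicator of the variable nodes in error. Its input syndrome is $\sigma\in\mathbb{F}_2^W$ with $\sigma_c=\sum_{v\in\mathcal{N}(c)}e_v \bmod 2$. - Initially every variable node sends $0$ on every edge. - In each iteration, each check node $c$ sends to a neighbour $v$ the value $\sigma_c+\sum_{v'\in\mathcal{N}(c)\setminus\{v\}} m_{v'\to c} \pmod 2$, where the $m_{v'\to c}$ are the current variable-to-check messages. - Each variable node $v$ then sends to a neighbour $c$ the majority of the messages it received from its neighbours other than $c$. It sends $0$ on a tie, in particular when $v$ has no other neighbour. - The estimated error $\hat e_v$ is the majority of all incoming check-to-variable messages at $v$, and $0$ on a tie. - The estimated syndrome at $c$ is the mod-2 sum of the variable-to-check messages arriving at $c$. - Before any message passing, all messages are $0$, the estimated syndrome is $\vec 0$ and $\hat e=\vec 0$. - The decoder halts and outputs $\hat e$ as soon as the estimated syndrome equals $\sigma$; otherwise it iterates indefinitely. Decoding failure occurs if either: - the decoder never halts (the estimated syndrome is never eventually equal to $\sigma$, or the estimates fail to converge); or - it halts with $\hat e$ such that $e+\hat e$ is not in the $\mathbb{F}_2$-rowspace of the parity-check matrix of the graph being decoded on (a logical error). Halting with $e+\hat e$ in that rowspace is success (a degenerate error). A set $\mathcal{F}\subseteq V$ is a failure inducing set (for decoding on $\mathcal{G}$) if decoding with $e$ equal to the indicator of $\mathcal{F}$, all other variable nodes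 being correct, results in decoding failure. A nonempty $\mathcal{T}\subseteq V$ is a trapping set if some subset of $\mathcal{T}$ is failure inducing. *)

theory Defs
  imports Main
begin

text \<open>Binary values (elements of F_2) are
  represented by bool (True = 1); addition in F_2 is \<noteq> (xor).\<close>

definition tanner_graph :: "'v set \<Rightarrow> 'c set \<Rightarrow> ('v \<times> 'c) set \<Rightarrow> bool" where
  "tanner_graph V W E \<longleftrightarrow> finite V \<and> finite W \<and> E \<subseteq> V \<times> W"

definition nbr_chk :: "'c set \<Rightarrow> ('v \<times> 'c) set \<Rightarrow> 'v \<Rightarrow> 'c set" where
  "nbr_chk W E v = {c \<in> W. (v, c) \<in> E}"

definition nbr_var :: "'v set \<Rightarrow> ('v \<times> 'c) set \<Rightarrow> 'c \<Rightarrow> 'v set" where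
  "nbr_var V E c = {v \<in> V. (v, c) \<in> E}"

definition nbr_set :: "'c set \<Rightarrow> ('v \<times> 'c) set \<Rightarrow> 'v set \<Rightarrow> 'c set" where
  "nbr_set W E S = {c \<in> W. \<exists>v \<in> S. (v, c) \<in> E}"

definition parity :: "'a set \<Rightarrow> ('a \<Rightarrow> bool) \<Rightarrow> bool" where
  "parity S f \<longleftrightarrow> odd (card {x \<in> S. f x})"

definition maj :: "'a set \<Rightarrow> ('a \<Rightarrow> bool) \<Rightarrow> bool" where
  "maj S f \<longleftrightarrow> card {x \<in> S. \<not> f x} < card {x \<in> S. f x}"

definition odd_chks :: "'c set \<Rightarrow> ('v \<times> 'c) set \<Rightarrow> 'v set \<Rightarrow> 'c set" where
  "odd_chks W E S = {c \<in> nbr_set W E S. odd (card {v \<in> S. (v, c) \<in> E})}"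

definition even_chks :: "'c set \<Rightarrow> ('v \<times> 'c) set \<Rightarrow> 'v set \<Rightarrow> 'c set" where
  "even_chks W E S = {c \<in> nbr_set W E S. even (card {v \<in> S. (v, c) \<in> E})}"

definition absorbing_set :: "'v set \<Rightarrow> 'c set \<Rightarrow> ('v \<times> 'c) set \<Rightarrow> 'v set \<Rightarrow> nat \<Rightarrow> nat \<Rightarrow> bool" where
  "absorbing_set V W E A a b \<longleftrightarrow> A \<subseteq> V \<and> card A = a \<and> card (odd_chks W E A) = b \<and>
     (\<forall>v \<in> A. card {c \<in> odd_chks W E A. (v, c) \<in> E} < card {c \<in> even_chks W E A. (v, c) \<in> E})"

text \<open>Absorbing set graph G_A = (A, N(A); edges between A and N(A)).\<close>
definition sub_chks :: "'c set \<Rightarrow> ('v \<times> 'c) set \<Rightarrow> 'v set \<Rightarrow> 'c set" where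
  "sub_chks W E S = nbr_set W E S"

definition sub_edges :: "'c set \<Rightarrow> ('v \<times> 'c) set \<Rightarrow> 'v set \<Rightarrow> ('v \<times> 'c) set" where
  "sub_edges W E S = E \<inter> (S \<times> nbr_set W E S)"

definition syndrome :: "'v set \<Rightarrow> ('v \<times> 'c) set \<Rightarrow> ('v \<Rightarrow> bool) \<Rightarrow> 'c \<Rightarrow> bool" where
  "syndrome V E e c = parity (nbr_var V E c) e"

text \<open>Syndrome-based Gallager-B decoder.  gb_vc V W E \<sigma> t v c is the variable-to-check
  message from v to c after t iterations (all 0 for t = 0).\<close>
primrec gb_vc :: "'v set \<Rightarrow> 'c set \<Rightarrow> ('v \<times> 'c) set \<Rightarrow> ('c \<Rightarrow> bool) \<Rightarrow> nat \<Rightarrow> 'v \<Rightarrow> 'c \<Rightarrow> bool" where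
  "gb_vc V W E \<sigma> 0 v c = False"
| "gb_vc V W E \<sigma> (Suc t) v c =
     maj (nbr_chk W E v - {c})
       (\<lambda>c'. \<sigma> c' \<noteq> parity (nbr_var V E c' - {v}) (\<lambda>v'. gb_vc V W E \<sigma> t v' c'))"

text \<open>Check-to-variable message from c to v in iteration t+1.\<close>
definition gb_cv :: "'v set \<Rightarrow> 'c set \<Rightarrow> ('v \<times> 'c) set \<Rightarrow> ('c \<Rightarrow> bool) \<Rightarrow> nat \<Rightarrow> 'c \<Rightarrow> 'v \<Rightarrow> bool" where
  "gb_cv V W E \<sigma> t c v \<longleftrightarrow> \<sigma> c \<noteq> parity (nbr_var V E c - {v}) (\<lambda>v'. gb_vc V W E \<sigma> t v' c)"

definition gb_est :: "'v set \<Rightarrow> 'c set \<Rightarrow> ('v \<times> 'c) set \<Rightarrow> ('c \<Rightarrow> bool) \<Rightarrow> nat \<Rightarrow> 'v \<Rightarrow> bool" where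
  "gb_est V W E \<sigma> t v = (case t of 0 \<Rightarrow> False
      | Suc s \<Rightarrow> maj (nbr_chk W E v) (\<lambda>c. gb_cv V W E \<sigma> s c v))"

definition gb_syn :: "'v set \<Rightarrow> 'c set \<Rightarrow> ('v \<times> 'c) set \<Rightarrow> ('c \<Rightarrow> bool) \<Rightarrow> nat \<Rightarrow> 'c \<Rightarrow> bool" where
  "gb_syn V W E \<sigma> t c = parity (nbr_var V E c) (\<lambda>v. gb_vc V W E \<sigma> t v c)"

definition gb_halts_at :: "'v set \<Rightarrow> 'c set \<Rightarrow> ('v \<times> 'c) set \<Rightarrow> ('c \<Rightarrow> bool) \<Rightarrow> nat \<Rightarrow> bool" where
  "gb_halts_at V W E \<sigma> t \<longleftrightarrow> (\<forall>c \<in> W. gb_syn V W E \<sigma> t c = \<sigma> c)"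

definition in_rowspace :: "'v set \<Rightarrow> 'c set \<Rightarrow> ('v \<times> 'c) set \<Rightarrow> ('v \<Rightarrow> bool) \<Rightarrow> bool" where
  "in_rowspace V W E x \<longleftrightarrow> (\<exists>S \<subseteq> W. \<forall>v \<in> V. x v = parity S (\<lambda>c. (v, c) \<in> E))"

definition decoding_failure :: "'v set \<Rightarrow> 'c set \<Rightarrow> ('v \<times> 'c) set \<Rightarrow> ('v \<Rightarrow> bool) \<Rightarrow> bool" where
  "decoding_failure V W E e \<longleftrightarrow>
     (let \<sigma> = syndrome V E e in
       (\<forall>t. \<not> gb_halts_at V W E \<sigma> t) \<or>
       (\<exists>t. gb_halts_at V W E \<sigma> t \<and> (\<forall>s < t. \<not> gb_halts_at V W E \<sigma> s) \<and>
            \<not> in_rowspace V W E (\<lambda>v. e v \<noteq> gb_est V W E \<sigma> t v)))"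

definition failure_inducing :: "'v set \<Rightarrow> 'c set \<Rightarrow> ('v \<times> 'c) set \<Rightarrow> 'v set \<Rightarrow> bool" where
  "failure_inducing V W E F \<longleftrightarrow> F \<subseteq> V \<and> decoding_failure V W E (\<lambda>v. v \<in> F)"

end

theory Submission
  imports Defs
begin

lemma card_minus_ge: "finite X \<Longrightarrow> card X - 1 \<le> card (X - {c})"
  by (metis card_Diff_singleton_if diff_le_self order_refl)

theorem theorem1:
  fixes V :: "'v set" and W :: "'c set" and E :: "('v \<times> 'c) set"
    and A :: "'v set" and a b :: nat
  assumes "tanner_graph V W E"
    and "absorbing_set V W E A a b"
    and "b \<ge> 1"
  defines "WA \<equiv> sub_chks W E A" and "EA \<equiv> sub_edges W E A"
  shows "failure_inducing A WA EA A
    \<and> (\<forall>c \<in> WA. (syndrome A EA (\<lambda>v. v \<in> A)) c \<longleftrightarrow> c \<in> odd_chks W E A)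
    \<and> (\<forall>t. \<forall>c \<in> WA. \<not> gb_syn A WA EA (syndrome A EA (\<lambda>v. v \<in> A)) t c)
    \<and> (\<forall>t. \<forall>c \<in> odd_chks W E A. gb_syn A WA EA (syndrome A EA (\<lambda>v. v \<in> A)) t c \<noteq> (syndrome A EA (\<lambda>v. v \<in> A)) c)"
proof -
  define \<sigma> where "\<sigma> = syndrome A EA (\<lambda>v. v \<in> A)"
  have finW: "finite W" using assms(1) by (simp add: tanner_graph_def)
  have abs: "A \<subseteq> V" "card (odd_chks W E A) = b"
    "\<forall>v \<in> A. card {c \<in> odd_chks W E A. (v, c) \<in> E} < card {c \<in> even_chks W E A. (v, c) \<in> E}"
    using assms(2) by (auto simp: absorbing_set_def)
  have sig: "\<sigma> c \<longleftrightarrow> c \<in> odd_chks W E A" if "c \<in> WA" for c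
  proof -
    have "{x \<in> nbr_var A EA c. x \<in> A} = {v \<in> A. (v, c) \<in> E}"
      using that by (auto simp: nbr_var_def EA_def sub_edges_def WA_def sub_chks_def)
    then show ?thesis using that
      by (simp add: \<sigma>_def syndrome_def parity_def odd_chks_def WA_def sub_chks_def)
  qed
  have zero: "\<not> gb_vc A WA EA \<sigma> t v c" for t v c
  proof (induction t arbitrary: v c)
    case 0 then show ?case by simp
  next
    case (Suc t)
    have par: "parity S (\<lambda>v'. gb_vc A WA EA \<sigma> t v' c') = False" for S c'
      using Suc.IH by (simp add: parity_def)
    show ?case
    proof (cases "v \<in> A")
      case False
      have "nbr_chk WA EA v = {}" using False by (auto simp: nbr_chk_def EA_def sub_edges_def)
      then show ?thesis by (simp add: maj_def par)
    next
      case True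
      let ?N = "nbr_chk WA EA v"
      define X where "X = {c \<in> even_chks W E A. (v, c) \<in> E}"
      define Y where "Y = {c \<in> odd_chks W E A. (v, c) \<in> E}"
      have fX: "finite X" unfolding X_def even_chks_def nbr_set_def using finW by auto
      have XY: "card Y < card X" using abs(3) True unfolding X_def Y_def by auto
      have e1: "{x \<in> ?N - {c}. \<not> \<sigma> x} = X - {c}"
        using sig True
        by (auto simp: X_def nbr_chk_def EA_def sub_edges_def WA_def sub_chks_def
            even_chks_def odd_chks_def)
      have e2: "{x \<in> ?N - {c}. \<sigma> x} = Y - {c}"
        using sig True
        by (auto simp: Y_def nbr_chk_def EA_def sub_edges_def WA_def sub_chks_def
            even_chks_def odd_chks_def)
      have "card (Y - {c}) \<le> card Y" by (simp add: card_Diff1_le)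
      moreover have "card X - 1 \<le> card (X - {c})" using card_minus_ge[OF fX] .
      ultimately have "card (Y - {c}) \<le> card (X - {c})" using XY by linarith
      then show ?thesis unfolding gb_vc.simps maj_def par e1[symmetric] e2[symmetric] by simp
    qed
  qed
  have syn0: "\<not> gb_syn A WA EA \<sigma> t c" for t c
    using zero by (simp add: gb_syn_def parity_def)
  have "odd_chks W E A \<noteq> {}" using abs(2) assms(3) by auto
  then obtain c0 where c0: "c0 \<in> odd_chks W E A" by auto
  have c0W: "c0 \<in> WA" using c0 by (simp add: odd_chks_def WA_def sub_chks_def)
  have nh: "\<not> gb_halts_at A WA EA \<sigma> t" for t
    using syn0 sig[OF c0W] c0 c0W by (auto simp: gb_halts_at_def)
  have fi: "failure_inducing A WA EA A"
    using nh by (simp add: failure_inducing_def decoding_failure_def \<sigma>_def Let_def)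
  show ?thesis
    using fi sig syn0 c0 by (auto simp: \<sigma>_def[symmetric] odd_chks_def WA_def sub_chks_def)
qed

end
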